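(* Let $L$ be a finite lattice, $\varphi\in M_1(L)$, and let $(a_1,\dots,a_n)$ be a monotone path in $L$. Set $\varphi_0=\varphi$ and $\varphi_i=\Lambda_{a_i}\varphi_{i-1}$ for $i=1,\dots,n$. Let $\Psi_i\in M_\infty(\mathcal L)$ satisfy $\Pi(\Psi_i)=\lambda(\varphi_i;a_{i+1},\cdot)$ for $i=0,\dots,n-1$, let $\Psi_n\in M_\infty(\mathcal L)$ satisfy $\Pi(\Psi_n)=\varphi_n$, and put $\Phi=\sum_{i=0}^n\Psi_i$. For $x\in L$ and $1\le k\le n$ let $\pi^x_{a_1,\ldots,a_k}$ be the function on $\mathcal L$ equal to $1$ at $V$ if $x\in V$ and $a_i\notin V$ for all $i=1,\dots,k$, and $0$ otherwise. Then $$\Lambda_{a_1,\ldots,a_k}\varphi(x)=\Phi\big(\pi^x_{a_1,\ldots,a_k}\big)\qquad\text{for all }x\in L\text{ and }k=1,\dots,n.$$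
   Context: $L$ is a finite lattice with join $\vee$. $M_1(L)$ is the set of nonnegative monotone real functions on $L$. A path from $a$ to $b$ is a sequence $H=(h_0,\dots,h_m)$ of distinct elements of $L$ with $h_0=a$, $h_m=b$; $\varphi(H)=\sum_{i=0}^m\varphi(h_i)-\sum_{i=1}^m\varphi(h_{i-1}\vee h_i)$; $\lambda(\varphi;a,b)=\max\{\varphi(H): H\text{ a path from }a\text{ to }b\}$; $\Lambda_a\varphi(x)=\varphi(x)-\lambda(\varphi;a,x)$ and $\Lambda_{a_1,\ldots,a_k}\varphi=\Lambda_{a_k}(\Lambda_{a_1,\ldots,a_{k-1}}\varphi)$; $\Lambda_a$ maps $M_1(L)$ into itself and so does $\lambda(\varphi;a,\cdot)$ for $\varphi\in M_1(L)$. A monotone path is a sequence $(a_1,\dots,a_n)$ of distinct elements of $L$ such that $i<j$ whenever $a_i<a_j$. $\mathcal L$ is the set of nonempty up-sets of $L$, ordered by $U\preceq V$ iff $U\supseteq V$ (meet = union). $M_\infty(\mathcal L)$ is the set of nonnegative completely monotone functions on $(\mathcal L,\preceq)$; $\Pi(\Psi)(x)=\Psi(\{y:y\ge x\})$. Every element of $M_1(L)$ is $\Pi(\Psi)$ for some $\Psi\in M_\infty(\mathcal L)$. For $\Phi\in M_\infty(\mathcal L)$ with Möbius inverse $F$ (the unique $F$ with $\Phi(U)=\sum_{V\preceq U}F(V)$) and $g$ a real function on $\mathcal L$, $\Phi(g)=\sum_{V\in\mathcal L}F(V)g(V)$. *)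

theory Defs
  imports Complex_Main
begin

definition M1 :: "('a::{finite,lattice} \<Rightarrow> real) \<Rightarrow> bool" where
  "M1 \<phi> \<longleftrightarrow> (\<forall>x. 0 \<le> \<phi> x) \<and> mono \<phi>"

definition paths :: "'a \<Rightarrow> 'a \<Rightarrow> 'a list set" where
  "paths a b = {H. H \<noteq> [] \<and> distinct H \<and> hd H = a \<and> last H = b}"

definition path_val :: "('a::lattice \<Rightarrow> real) \<Rightarrow> 'a list \<Rightarrow> real" where
  "path_val \<phi> H = (\<Sum>i<length H. \<phi> (H ! i))
      - (\<Sum>i\<in>{1..<length H}. \<phi> (sup (H ! (i - 1)) (H ! i)))"

definition lam :: "('a::{finite,lattice} \<Rightarrow> real) \<Rightarrow> 'a \<Rightarrow> 'a \<Rightarrow> real" where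
  "lam \<phi> a b = Max (path_val \<phi> ` paths a b)"

definition Lam :: "'a::{finite,lattice} \<Rightarrow> ('a \<Rightarrow> real) \<Rightarrow> ('a \<Rightarrow> real)" where
  "Lam a \<phi> = (\<lambda>x. \<phi> x - lam \<phi> a x)"

definition Lam_seq :: "'a::{finite,lattice} list \<Rightarrow> ('a \<Rightarrow> real) \<Rightarrow> ('a \<Rightarrow> real)" where
  "Lam_seq as \<phi> = fold Lam as \<phi>"

definition monotone_path :: "'a::order list \<Rightarrow> bool" where
  "monotone_path as \<longleftrightarrow> distinct as \<and>
     (\<forall>i<length as. \<forall>j<length as. as ! i < as ! j \<longrightarrow> i < j)"

text \<open>Nonempty up-sets of L; the order U \<preceq> V is V \<subseteq> U, meet is union.\<close>
definition upsets :: "'a::order set set" where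
  "upsets = {U. U \<noteq> {} \<and> (\<forall>x\<in>U. \<forall>y. x \<le> y \<longrightarrow> y \<in> U)}"

definition M_inf :: "('a::order set \<Rightarrow> real) \<Rightarrow> bool" where
  "M_inf \<Psi> \<longleftrightarrow> (\<forall>U\<in>upsets. 0 \<le> \<Psi> U) \<and>
     (\<forall>k::nat. k \<ge> 1 \<longrightarrow> (\<forall>Us U. (\<forall>i<k. Us i \<in> upsets) \<and> U \<in> upsets \<and> (\<forall>i<k. U \<subseteq> Us i)
        \<longrightarrow> (\<Sum>I\<in>{I. I \<subseteq> {..<k} \<and> I \<noteq> {}}. (-1) ^ (card I + 1) * \<Psi> (\<Union>i\<in>I. Us i)) \<le> \<Psi> U))"

definition Pi_map :: "('a::order set \<Rightarrow> real) \<Rightarrow> ('a \<Rightarrow> real)" where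
  "Pi_map \<Psi> = (\<lambda>x. \<Psi> {y. x \<le> y})"

definition moebius_inv :: "('a::order set \<Rightarrow> real) \<Rightarrow> ('a set \<Rightarrow> real)" where
  "moebius_inv \<Phi> = (THE F. (\<forall>U\<in>upsets. \<Phi> U = (\<Sum>V\<in>{V\<in>upsets. U \<subseteq> V}. F V))
                        \<and> (\<forall>U. U \<notin> upsets \<longrightarrow> F U = 0))"

definition integ :: "('a::{finite,order} set \<Rightarrow> real) \<Rightarrow> ('a set \<Rightarrow> real) \<Rightarrow> real" where
  "integ \<Phi> g = (\<Sum>V\<in>upsets. moebius_inv \<Phi> V * g V)"

definition pi_fun :: "'a \<Rightarrow> 'a list \<Rightarrow> 'a set \<Rightarrow> real" where
  "pi_fun x as V = (if x \<in> V \<and> (\<forall>a\<in>set as. a \<notin> V) then 1 else 0)"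

end

theory Submission
  imports Defs
begin


definition msum :: "('a::order set \<Rightarrow> real) \<Rightarrow> 'a set \<Rightarrow> real" where
  "msum F U = (\<Sum>V\<in>{V\<in>upsets. U \<subseteq> V}. F V)"

lemma up_upsets: "{y. (x::'a::order) \<le> y} \<in> upsets"
  unfolding upsets_def by auto

lemma up_sub_iff: "V \<in> upsets \<Longrightarrow> ({y. (x::'a::order) \<le> y} \<subseteq> V) = (x \<in> V)"
  unfolding upsets_def by auto

lemma msum_split:
  fixes F :: "'a::{finite,order} set \<Rightarrow> real"
  assumes "U \<in> upsets"
  shows "msum F U = F U + (\<Sum>V\<in>{V\<in>upsets. U \<subset> V}. F V)"
proof -
  have "{V\<in>upsets. U \<subseteq> V} = insert U {V\<in>upsets. U \<subset> V}" using assms by auto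
  then show ?thesis unfolding msum_def by (simp add: sum.insert)
qed

lemma card_compl_less:
  fixes U V :: "'a::finite set"
  assumes "U \<subset> V" shows "card (- V) < card (- U)"
  using assms by (intro psubset_card_mono) auto

lemma moeb_unique:
  fixes F G :: "'a::{finite,order} set \<Rightarrow> real"
  assumes "\<forall>U\<in>upsets. msum F U = msum G U" "\<forall>U. U\<notin>upsets \<longrightarrow> F U = 0"
    "\<forall>U. U\<notin>upsets \<longrightarrow> G U = 0"
  shows "F = G"
proof
  fix U show "F U = G U"
  proof (induction U rule: measure_induct_rule[of "\<lambda>U. card (- U)"])
    case (less U)
    show ?case
    proof (cases "U \<in> upsets")
      case True
      have "(\<Sum>V\<in>{V\<in>upsets. U \<subset> V}. F V) = (\<Sum>V\<in>{V\<in>upsets. U \<subset> V}. G V)"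
        using less card_compl_less by (intro sum.cong) auto
      then show ?thesis using assms(1) True msum_split[OF True, of F] msum_split[OF True, of G]
        by auto
    qed (use assms in auto)
  qed
qed

lemma moeb_exists_aux:
  fixes \<Psi> :: "'a::{finite,order} set \<Rightarrow> real"
  shows "\<exists>F. (\<forall>U. U\<notin>upsets \<longrightarrow> F U = 0) \<and> (\<forall>U\<in>upsets. card (- U) < m \<longrightarrow> \<Psi> U = msum F U)"
proof (induction m)
  case 0
  then show ?case by (intro exI[of _ "\<lambda>_. 0"]) auto
next
  case (Suc m)
  then obtain F where F: "\<forall>U. U\<notin>upsets \<longrightarrow> F U = 0"
    "\<forall>U\<in>upsets. card (- U) < m \<longrightarrow> \<Psi> U = msum F U" by blast
  define F' where "F' U = (if U \<in> upsets \<and> card (- U) = m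
      then \<Psi> U - (\<Sum>V\<in>{V\<in>upsets. U \<subset> V}. F V) else F U)" for U
  have eqF: "F' V = F V" if "card (- V) \<noteq> m" for V using that by (simp add: F'_def)
  show ?case
  proof (intro exI[of _ F'] conjI allI ballI impI)
    fix U :: "'a set" assume "U \<notin> upsets" then show "F' U = 0" using F by (simp add: F'_def)
  next
    fix U :: "'a set" assume U: "U \<in> upsets" "card (- U) < Suc m"
    have sub: "(\<Sum>V\<in>{V\<in>upsets. U \<subset> V}. F' V) = (\<Sum>V\<in>{V\<in>upsets. U \<subset> V}. F V)"
    proof (intro sum.cong refl eqF)
      fix V assume "V \<in> {V \<in> upsets. U \<subset> V}"
      then have "card (- V) < card (- U)" by (intro card_compl_less) auto
      then show "card (- V) \<noteq> m" using U by linarith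
    qed
    show "\<Psi> U = msum F' U"
    proof (cases "card (- U) = m")
      case True
      then show ?thesis using U msum_split[OF U(1), of F'] sub by (simp add: F'_def)
    next
      case False
      have "msum F' U = msum F U" unfolding msum_def
      proof (intro sum.cong refl eqF)
        fix V assume "V \<in> {V \<in> upsets. U \<subseteq> V}"
        then have "card (- V) \<le> card (- U)" by (intro card_mono) auto
        then show "card (- V) \<noteq> m" using U False by linarith
      qed
      then show ?thesis using F U False by auto
    qed
  qed
qed

lemma moeb_exists:
  fixes \<Psi> :: "'a::{finite,order} set \<Rightarrow> real"
  shows "\<exists>F. (\<forall>U\<in>upsets. \<Psi> U = msum F U) \<and> (\<forall>U. U\<notin>upsets \<longrightarrow> F U = 0)"
proof -
  obtain F where F: "\<forall>U. U\<notin>upsets \<longrightarrow> F U = 0"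
    "\<forall>U\<in>upsets. card (- U) < Suc (card (UNIV::'a set)) \<longrightarrow> \<Psi> U = msum F U"
    using moeb_exists_aux by blast
  have "card (- U) < Suc (card (UNIV::'a set))" for U :: "'a set"
    using card_mono[of UNIV "- U"] by simp
  then show ?thesis using F by blast
qed

lemma moeb_prop:
  fixes \<Psi> :: "'a::{finite,order} set \<Rightarrow> real"
  shows "(\<forall>U\<in>upsets. \<Psi> U = msum (moebius_inv \<Psi>) U) \<and> (\<forall>U. U\<notin>upsets \<longrightarrow> moebius_inv \<Psi> U = 0)"
proof -
  have ex1: "\<exists>!F. (\<forall>U\<in>upsets. \<Psi> U = msum F U) \<and> (\<forall>U. U\<notin>upsets \<longrightarrow> F U = 0)"
  proof -
    obtain F where "(\<forall>U\<in>upsets. \<Psi> U = msum F U) \<and> (\<forall>U. U\<notin>upsets \<longrightarrow> F U = 0)"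
      using moeb_exists by blast
    moreover have "G = F" if "(\<forall>U\<in>upsets. \<Psi> U = msum G U) \<and> (\<forall>U. U\<notin>upsets \<longrightarrow> G U = 0)" for G
      using that calculation by (intro moeb_unique) auto
    ultimately show ?thesis by blast
  qed
  show ?thesis
    unfolding moebius_inv_def using theI'[OF ex1[unfolded msum_def]] unfolding msum_def .
qed

lemma moeb_eq: "U \<in> upsets \<Longrightarrow> msum (moebius_inv \<Psi>) U = (\<Psi>::'a::{finite,order} set \<Rightarrow> real) U"
  using moeb_prop by metis

lemma moeb_zero: "U \<notin> upsets \<Longrightarrow> moebius_inv (\<Psi>::'a::{finite,order} set \<Rightarrow> real) U = 0"
  using moeb_prop by metis

lemma moeb_sum:
  fixes \<Psi> :: "nat \<Rightarrow> 'a::{finite,order} set \<Rightarrow> real"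
  shows "moebius_inv (\<lambda>U. \<Sum>i\<le>n. \<Psi> i U) = (\<lambda>V. \<Sum>i\<le>n. moebius_inv (\<Psi> i) V)"
proof (rule moeb_unique)
  show "\<forall>U\<in>upsets. msum (moebius_inv (\<lambda>U. \<Sum>i\<le>n. \<Psi> i U)) U = msum (\<lambda>V. \<Sum>i\<le>n. moebius_inv (\<Psi> i) V) U"
  proof
    fix U :: "'a set" assume U: "U \<in> upsets"
    have "msum (\<lambda>V. \<Sum>i\<le>n. moebius_inv (\<Psi> i) V) U = (\<Sum>i\<le>n. msum (moebius_inv (\<Psi> i)) U)"
      unfolding msum_def by (rule sum.swap)
    also have "\<dots> = (\<Sum>i\<le>n. \<Psi> i U)" using moeb_eq[OF U] by simp
    finally show "msum (moebius_inv (\<lambda>U. \<Sum>i\<le>n. \<Psi> i U)) U = msum (\<lambda>V. \<Sum>i\<le>n. moebius_inv (\<Psi> i) V) U"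
      using moeb_eq[OF U] by simp
  qed
qed (auto simp: moeb_zero)

lemma Union_upsets: "B \<noteq> {} \<Longrightarrow> (\<And>i. i\<in>B \<Longrightarrow> X i \<in> upsets) \<Longrightarrow> (\<Union>i\<in>B. X i) \<in> upsets"
  unfolding upsets_def by simp blast
lemma Inter_G: "B \<noteq> {} \<Longrightarrow> (\<Inter>i\<in>B. {V\<in>upsets. X i \<subseteq> V}) = {V\<in>upsets. (\<Union>i\<in>B. X i) \<subseteq> V}"
proof (rule set_eqI)
  fix V assume "B \<noteq> {}"
  then show "V \<in> (\<Inter>i\<in>B. {V\<in>upsets. X i \<subseteq> V}) \<longleftrightarrow> V \<in> {V\<in>upsets. (\<Union>i\<in>B. X i) \<subseteq> V}"
    by (simp only: INT_iff mem_Collect_eq UN_subset_iff) blast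
qed



lemma moeb_nonneg:
  fixes \<Psi> :: "'a::{finite,order} set \<Rightarrow> real"
  assumes M: "M_inf \<Psi>"
  shows "0 \<le> moebius_inv \<Psi> U"
proof -
  define F where "F = moebius_inv \<Psi>"
  have ?thesis if "U \<notin> upsets" using moeb_zero[OF that, of \<Psi>] by simp
  moreover have ?thesis if U: "U \<in> upsets" and UU: "U = UNIV"
  proof -
    have e: "{V\<in>upsets. U \<subset> V} = {}" using UU by auto
    have "msum F U = F U" using msum_split[OF U, of F] unfolding e by simp
    then have "F U = \<Psi> U" using moeb_eq[OF U, of \<Psi>] unfolding F_def by simp
    then show ?thesis using M[unfolded M_inf_def, THEN conjunct1] U unfolding F_def by simp
  qed
  moreover have ?thesis if U: "U \<in> upsets" and UU: "U \<noteq> UNIV"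
  proof -
    obtain xs where xs: "set xs = - U" "distinct xs" using finite_distinct_list[OF finite[of "- U"]] by blast
    define k where "k = length xs"
    have "xs \<noteq> []"
    proof
      assume "xs = []" then have "- U = {}" using xs by simp
      then show False using UU by blast
    qed
    then have k1: "k \<ge> 1" unfolding k_def by (simp add: Suc_le_eq)
    define Us where "Us i = U \<union> {z. xs ! i \<le> z}" for i
    have U1: "U \<noteq> {}" "\<And>x y. x \<in> U \<Longrightarrow> x \<le> y \<Longrightarrow> y \<in> U" using U unfolding upsets_def by auto
    have Usup: "Us i \<in> upsets" for i
      unfolding upsets_def
    proof (intro CollectI conjI ballI allI impI)
      show "Us i \<noteq> {}" using U1 unfolding Us_def by auto
      fix x y assume "x \<in> Us i" "x \<le> y"
      then show "y \<in> Us i" using U1(2)[of x y] unfolding Us_def by (auto dest: order_trans[of _ x y])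
    qed
    have UUs: "U \<subseteq> Us i" for i unfolding Us_def by auto
    have ineq: "(\<Sum>I\<in>{I. I \<subseteq> {..<k} \<and> I \<noteq> {}}. (-1) ^ (card I + 1) * \<Psi> (\<Union>i\<in>I. Us i)) \<le> \<Psi> U"
      using M[unfolded M_inf_def, THEN conjunct2, rule_format, of k Us U] k1 Usup U UUs by blast
    define G where "G i = {V\<in>upsets. Us i \<subseteq> V}" for i
    define f where "f S = (\<Sum>V\<in>S. F V)" for S :: "'a set set"
    have fadd: "f (S \<union> T) = f S + f T" if "disjnt S T" for S T
      unfolding f_def using that by (simp add: sum.union_disjoint disjnt_def)
    have IE: "f (\<Union>(G ` {..<k})) = (\<Sum>B | B \<subseteq> {..<k} \<and> B \<noteq> {}. (-1) ^ (card B + 1) * f (\<Inter> (G ` B)))"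
      by (rule Incl_Excl_UN) (use fadd in auto)
    have UG: "\<Union>(G ` {..<k}) = {V\<in>upsets. U \<subset> V}"
    proof (rule subset_antisym; rule subsetI)
      fix V assume "V \<in> \<Union>(G ` {..<k})"
      then obtain i where "V \<in> G i" "i < k" by auto
      then have V: "V \<in> upsets" "Us i \<subseteq> V" unfolding G_def by auto
      have "xs ! i \<notin> U" using xs \<open>i < k\<close> unfolding k_def
        by (metis ComplD nth_mem)
      moreover have "xs ! i \<in> Us i" unfolding Us_def by auto
      ultimately show "V \<in> {V\<in>upsets. U \<subset> V}" using UUs[of i] V by auto
    next
      fix V assume "V \<in> {V\<in>upsets. U \<subset> V}"
      then have V: "V \<in> upsets" "U \<subset> V" by auto
      then obtain z where z: "z \<in> V" "z \<notin> U" by auto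
      then obtain i where i: "i < k" "xs ! i = z" using xs unfolding k_def
        by (metis ComplI in_set_conv_nth)
      have "{y. z \<le> y} \<subseteq> V" using up_sub_iff[OF V(1)] z by simp
      then have "Us i \<subseteq> V" using V i unfolding Us_def by auto
      then show "V \<in> \<Union>(G ` {..<k})" using V i unfolding G_def by auto
    qed
    have GI: "f (\<Inter> (G ` B)) = \<Psi> (\<Union>i\<in>B. Us i)" if "B \<subseteq> {..<k}" "B \<noteq> {}" for B
    proof -
      have up: "(\<Union>i\<in>B. Us i) \<in> upsets" using that(2) Usup by (rule Union_upsets)
      have "\<Inter> (G ` B) = {V\<in>upsets. (\<Union>i\<in>B. Us i) \<subseteq> V}"
        unfolding G_def using Inter_G[OF that(2)] .
      then show ?thesis using moeb_eq[OF up, of \<Psi>] unfolding f_def msum_def F_def by simp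
    qed
    have "(\<Sum>V\<in>{V\<in>upsets. U \<subset> V}. F V) = (\<Sum>I\<in>{I. I \<subseteq> {..<k} \<and> I \<noteq> {}}. (-1) ^ (card I + 1) * \<Psi> (\<Union>i\<in>I. Us i))"
    proof -
      have "(\<Sum>V\<in>{V\<in>upsets. U \<subset> V}. F V) = f (\<Union>(G ` {..<k}))" using UG by (simp add: f_def)
      also have "\<dots> = (\<Sum>B | B \<subseteq> {..<k} \<and> B \<noteq> {}. (-1) ^ (card B + 1) * f (\<Inter> (G ` B)))" by (rule IE)
      also have "\<dots> = (\<Sum>I\<in>{I. I \<subseteq> {..<k} \<and> I \<noteq> {}}. (-1) ^ (card I + 1) * \<Psi> (\<Union>i\<in>I. Us i))"
      proof (rule sum.cong[OF refl])
        fix B assume "B \<in> {B. B \<subseteq> {..<k} \<and> B \<noteq> {}}"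
        then show "(-1) ^ (card B + 1) * f (\<Inter> (G ` B)) = (-1) ^ (card B + 1) * \<Psi> (\<Union>i\<in>B. Us i)"
          using GI by simp
      qed
      finally show ?thesis .
    qed
    then have "(\<Sum>V\<in>{V\<in>upsets. U \<subset> V}. F V) \<le> \<Psi> U" using ineq by simp
    then show ?thesis using msum_split[OF U, of F] moeb_eq[OF U, of \<Psi>] by (simp add: F_def)
  qed
  ultimately show ?thesis by blast
qed



lemma finite_paths: "finite (paths (a::'a::finite) b)"
proof (rule finite_subset[OF _ finite_lists_length_le[OF finite_UNIV, of "card (UNIV::'a set)"]])
  show "paths a b \<subseteq> {xs. set xs \<subseteq> UNIV \<and> length xs \<le> card (UNIV::'a set)}"
  proof
    fix H assume "H \<in> paths a b"
    then have "distinct H" unfolding paths_def by simp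
    then have "length H = card (set H)" by (simp add: distinct_card)
    also have "\<dots> \<le> card (UNIV::'a set)" by (rule card_mono) auto
    finally show "H \<in> {xs. set xs \<subseteq> UNIV \<and> length xs \<le> card (UNIV::'a set)}" by simp
  qed
qed

lemma paths_aa: "paths a a = {[a]}"
proof (rule set_eqI; rule iffI)
  fix H assume H: "H \<in> paths a a"
  then have Hd: "H \<noteq> []" "distinct H" "hd H = a" "last H = a" unfolding paths_def by auto
  show "H \<in> {[a]}"
  proof (cases H)
    case Nil then show ?thesis using Hd by simp
  next
    case (Cons x ys)
    show ?thesis
    proof (cases ys)
      case Nil then show ?thesis using Hd Cons by simp
    next
      case (Cons y zs)
      have "last H \<in> set ys" using \<open>H = x # ys\<close> Cons by simp
      moreover have "x \<notin> set ys" using Hd(2) \<open>H = x # ys\<close> by simp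
      moreover have "x = a" using Hd(3) \<open>H = x # ys\<close> by simp
      ultimately show ?thesis using Hd(4) by simp
    qed
  qed
next
  fix H assume "H \<in> {[a]}" then show "H \<in> paths a a" unfolding paths_def by simp
qed

lemma path_val_single: "path_val \<phi> [a] = \<phi> a"
  unfolding path_val_def by simp

lemma path_val_two: "path_val \<phi> [a, b] = \<phi> a + \<phi> b - \<phi> (sup a b)"
  unfolding path_val_def by (simp add: numeral_2_eq_2 lessThan_Suc)

lemma path_val_le:
  fixes \<phi> :: "'a::lattice \<Rightarrow> real"
  assumes "mono \<phi>" "H \<noteq> []"
  shows "path_val \<phi> H \<le> \<phi> (hd H)"
proof -
  have split: "{..<length H} = insert 0 {1..<length H}" using assms(2) by (cases H) auto
  have "(\<Sum>i<length H. \<phi> (H ! i)) = \<phi> (H ! 0) + (\<Sum>i\<in>{1..<length H}. \<phi> (H ! i))"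
    unfolding split by (simp add: sum.insert)
  moreover have "(\<Sum>i\<in>{1..<length H}. \<phi> (H ! i)) \<le> (\<Sum>i\<in>{1..<length H}. \<phi> (sup (H ! (i - 1)) (H ! i)))"
    by (rule sum_mono) (use assms(1) in \<open>simp add: monoD\<close>)
  moreover have "H ! 0 = hd H" using assms(2) by (simp add: hd_conv_nth)
  ultimately show ?thesis unfolding path_val_def by simp
qed

lemma paths_ne: "paths a b \<noteq> {}"
proof (cases "a = b")
  case True then show ?thesis using paths_aa[of a] by simp
next
  case False
  then have "[a, b] \<in> paths a b" unfolding paths_def by simp
  then show ?thesis by blast
qed

lemma lam_aa: "lam \<phi> (a::'a::{finite,lattice}) a = \<phi> a"
  unfolding lam_def paths_aa by (simp add: path_val_single)

lemma lam_le:
  fixes \<phi> :: "'a::{finite,lattice} \<Rightarrow> real"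
  assumes "mono \<phi>" shows "lam \<phi> a b \<le> \<phi> a"
  unfolding lam_def
proof (rule Max.boundedI)
  show "finite (path_val \<phi> ` paths a b)" using finite_paths[of a b] by simp
  show "path_val \<phi> ` paths a b \<noteq> {}" using paths_ne by simp
  fix v assume "v \<in> path_val \<phi> ` paths a b"
  then obtain H where "H \<in> paths a b" "v = path_val \<phi> H" by auto
  then show "v \<le> \<phi> a" using path_val_le[OF assms, of H] unfolding paths_def by auto
qed

lemma lam_ge:
  fixes \<phi> :: "'a::{finite,lattice} \<Rightarrow> real"
  assumes "a \<le> b" shows "\<phi> a \<le> lam \<phi> a b"
proof (cases "a = b")
  case True then show ?thesis using lam_aa[of \<phi> a] by simp
next
  case False
  then have H: "[a, b] \<in> paths a b" unfolding paths_def by simp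
  have "path_val \<phi> [a, b] = \<phi> a" using assms by (simp add: path_val_two sup_absorb2)
  moreover have "path_val \<phi> [a, b] \<le> lam \<phi> a b" unfolding lam_def
    using H finite_paths[of a b] by (intro Max_ge) auto
  ultimately show ?thesis by simp
qed

lemma lam_above:
  fixes \<phi> :: "'a::{finite,lattice} \<Rightarrow> real"
  assumes "mono \<phi>" "a \<le> b" shows "lam \<phi> a b = \<phi> a"
  using lam_le[OF assms(1)] lam_ge[OF assms(2)] by (simp add: order_antisym)

lemma Lam_self: "Lam a \<phi> (a::'a::{finite,lattice}) = 0"
  unfolding Lam_def lam_aa by simp



lemma M_inf_mono:
  fixes \<Psi> :: "'a::order set \<Rightarrow> real"
  assumes "M_inf \<Psi>" "(y::'a) \<le> z"
  shows "\<Psi> {w. y \<le> w} \<le> \<Psi> {w. z \<le> w}"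
proof -
  have e: "{I. I \<subseteq> {..<Suc 0} \<and> I \<noteq> {}} = {{0}}" by auto
  have sub: "{w. z \<le> w} \<subseteq> {w. y \<le> w}" using assms(2) by (auto intro: order_trans)
  show ?thesis
    using assms(1)[unfolded M_inf_def, THEN conjunct2, rule_format, of 1 "\<lambda>_. {w. y \<le> w}" "{w. z \<le> w}"]
      up_upsets[of y] up_upsets[of z] sub by (simp add: e)
qed

lemma upset_mono: "W \<in> upsets \<Longrightarrow> (a::'a::order) \<in> W \<Longrightarrow> a \<le> b \<Longrightarrow> b \<in> W"
  unfolding upsets_def by blast

lemma sum_zero_member:
  fixes f :: "'b \<Rightarrow> real"
  assumes "finite S" "\<And>W. W \<in> S \<Longrightarrow> 0 \<le> f W" "sum f S = 0" "V \<in> S"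
  shows "f V = 0"
  using sum_nonneg_eq_0_iff[OF assms(1)] assms by blast

theorem theorem3p15:
  fixes \<phi> :: "'a::{finite,lattice} \<Rightarrow> real"
    and as :: "'a list"
    and \<Psi> :: "nat \<Rightarrow> 'a set \<Rightarrow> real"
  assumes "M1 \<phi>"
    and "monotone_path as"
    and "\<forall>i\<le>length as. M_inf (\<Psi> i)"
    and "\<forall>i<length as. Pi_map (\<Psi> i) = lam (Lam_seq (take i as) \<phi>) (as ! i)"
    and "Pi_map (\<Psi> (length as)) = Lam_seq as \<phi>"
  shows "\<forall>x. \<forall>k\<in>{1..length as}.
           Lam_seq (take k as) \<phi> x = integ (\<lambda>U. \<Sum>i\<le>length as. \<Psi> i U) (pi_fun x (take k as))"
proof (intro allI ballI)
  fix x k assume k: "k \<in> {1..length as}"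
  define n where "n = length as"
  define ph where "ph i = Lam_seq (take i as) \<phi>" for i
  define P where "P i = Pi_map (\<Psi> i)" for i
  have kn: "1 \<le> k" "k \<le> n" using k n_def by auto
  have Mi: "M_inf (\<Psi> i)" if "i \<le> n" for i using assms(3) that n_def by simp
  have Pnn: "0 \<le> P i y" if "i \<le> n" for i y
    using Mi[OF that, unfolded M_inf_def, THEN conjunct1] up_upsets[of y]
    unfolding P_def Pi_map_def by simp
  have Pmono: "mono (P i)" if "i \<le> n" for i
    by (rule monoI) (use M_inf_mono[OF Mi[OF that]] in \<open>simp add: P_def Pi_map_def\<close>)
  have Plam: "P i = lam (ph i) (as ! i)" if "i < n" for i
    using assms(4) that unfolding P_def ph_def n_def by simp
  have Pn: "P n = ph n" using assms(5) unfolding P_def ph_def n_def by simp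
  have step: "ph (Suc i) = Lam (as!i) (ph i)" if "i < n" for i
    unfolding ph_def Lam_seq_def using that by (simp add: take_Suc_conv_app_nth n_def)
  have decomp: "ph i y = P i y + ph (Suc i) y" if "i < n" for i y
    using step[OF that] Plam[OF that] unfolding Lam_def by simp
  have sumform: "ph i y = (\<Sum>j\<in>{i..n}. P j y)" if "i \<le> n" for i y
    using that
  proof (induction i rule: inc_induct)
    case base then show ?case using Pn by simp
  next
    case (step i)
    have "{i..n} = insert i {Suc i..n}" using step by auto
    then show ?case using step decomp[of i y] by simp
  qed
  have phmono: "mono (ph i)" if "i \<le> n" for i
  proof (rule monoI)
    fix y z :: 'a assume "y \<le> z"
    then show "ph i y \<le> ph i z" unfolding sumform[OF that]
      by (intro sum_mono) (use Pmono in \<open>auto dest: monoD\<close>)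
  qed
  have Pzero: "P i (as!j) = 0" if "j < i" "i \<le> n" for i j
  proof -
    have "ph (Suc j) (as!j) = 0" using step[of j] that Lam_self by simp
    then have "(\<Sum>l\<in>{Suc j..n}. P l (as!j)) = 0" using sumform[of "Suc j"] that by simp
    then show ?thesis using sum_zero_member[of "{Suc j..n}" "\<lambda>l. P l (as!j)" i] that Pnn by auto
  qed
  have Peq: "P i (sup y (as!i)) = P i (as!i)" if "i < n" for i y
  proof -
    have "mono (ph i)" using phmono that by simp
    then show ?thesis unfolding Plam[OF that]
      using lam_above[of "ph i" "as!i" "sup y (as!i)"] lam_aa[of "ph i" "as!i"] by simp
  qed
  define F where "F i = moebius_inv (\<Psi> i)" for i
  have Fnn: "0 \<le> F i V" if "i \<le> n" for i V unfolding F_def using moeb_nonneg[OF Mi[OF that]] .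
  have Fsum: "(\<Sum>W\<in>{W\<in>upsets. {z. y \<le> z} \<subseteq> W}. F i W) = P i y" for i y
    using moeb_eq[OF up_upsets[of y], of "\<Psi> i"] unfolding F_def P_def Pi_map_def msum_def .
  define A where "A = take k as"
  have A_mem: "\<exists>j<k. a = as ! j" if "a \<in> set A" for a
    using that kn unfolding A_def n_def by (auto simp: in_set_conv_nth)
  have A_in: "as ! i \<in> set A" if "i < k" for i
    using that kn unfolding A_def n_def by (auto simp: in_set_conv_nth intro!: exI[of _ i])
  have T_low: "(\<Sum>V\<in>upsets. F i V * pi_fun x A V) = 0" if "i < k" for i
  proof (rule sum.neutral, rule ballI)
    fix V :: "'a set" assume V: "V \<in> upsets"
    show "F i V * pi_fun x A V = 0"
    proof (cases "x \<in> V \<and> (\<forall>a\<in>set A. a \<notin> V)")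
      case False then have "pi_fun x A V = 0" unfolding pi_fun_def by (simp only: if_False)
      then show ?thesis by simp
    next
      case True
      define a where "a = as ! i"
      define y where "y = sup x a"
      have iin: "i < n" "i \<le> n" using that kn by auto
      have aV: "a \<notin> V" using True A_in[OF that] unfolding a_def by blast
      define S1 where "S1 = {W\<in>upsets. {z. y \<le> z} \<subseteq> W}"
      define S2 where "S2 = {W\<in>upsets. {z. a \<le> z} \<subseteq> W}"
      have S21: "S2 \<subseteq> S1"
      proof
        fix W assume "W \<in> S2"
        then have W: "W \<in> upsets" "a \<in> W" unfolding S2_def using up_sub_iff by blast+
        have "y \<in> W" using upset_mono[OF W, of y] unfolding y_def by simp
        then show "W \<in> S1" using W up_sub_iff unfolding S1_def by blast
      qed
      have e1: "sum (F i) S1 = P i y" using Fsum[of i y] unfolding S1_def .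
      have e2: "sum (F i) S2 = P i a" using Fsum[of i a] unfolding S2_def .
      have "P i y = P i a" using Peq[OF iin(1), of x] unfolding y_def a_def .
      then have "sum (F i) S1 = sum (F i) S2" using e1 e2 by simp
      then have "sum (F i) (S1 - S2) = 0" using S21 by (simp add: sum_diff)
      moreover have "V \<in> S1 - S2"
      proof -
        have "y \<in> V" using upset_mono[OF V, of x y] True unfolding y_def by simp
        then show ?thesis using V aV up_sub_iff unfolding S1_def S2_def by blast
      qed
      ultimately have "F i V = 0"
        using sum_zero_member[of "S1 - S2" "F i" V] Fnn[OF iin(2)] by auto
      then show ?thesis by simp
    qed
  qed
  have T_high: "(\<Sum>V\<in>upsets. F i V * pi_fun x A V) = P i x" if "k \<le> i" "i \<le> n" for i
  proof -
    have "(\<Sum>V\<in>upsets. F i V * pi_fun x A V) = (\<Sum>V\<in>upsets. if x \<in> V then F i V else 0)"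
    proof (rule sum.cong[OF refl])
      fix V :: "'a set" assume V: "V \<in> upsets"
      show "F i V * pi_fun x A V = (if x \<in> V then F i V else 0)"
      proof (cases "\<exists>a\<in>set A. a \<in> V")
        case False then show ?thesis unfolding pi_fun_def by auto
      next
        case True
        then obtain a where a: "a \<in> set A" "a \<in> V" by blast
        then obtain j where j: "j < k" "a = as ! j" using A_mem by blast
        have "P i a = 0" using Pzero[of j i] j that by simp
        then have "sum (F i) {W\<in>upsets. {z. a \<le> z} \<subseteq> W} = 0" using Fsum[of i a] by simp
        moreover have "V \<in> {W\<in>upsets. {z. a \<le> z} \<subseteq> W}" using V a up_sub_iff by blast
        ultimately have "F i V = 0"
          using sum_zero_member[of "{W\<in>upsets. {z. a \<le> z} \<subseteq> W}" "F i" V] Fnn[OF that(2)] by auto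
        then show ?thesis by simp
      qed
    qed
    also have "\<dots> = sum (F i) {V\<in>upsets. x \<in> V}" by (simp add: sum.inter_filter)
    also have "{V\<in>upsets. x \<in> V} = {W\<in>upsets. {z. x \<le> z} \<subseteq> W}" using up_sub_iff by blast
    finally show ?thesis using Fsum[of i x] by simp
  qed
  have "integ (\<lambda>U. \<Sum>i\<le>n. \<Psi> i U) (pi_fun x A) = (\<Sum>V\<in>upsets. (\<Sum>i\<le>n. F i V) * pi_fun x A V)"
    unfolding integ_def moeb_sum F_def ..
  also have "\<dots> = (\<Sum>i\<le>n. \<Sum>V\<in>upsets. F i V * pi_fun x A V)"
    unfolding sum_distrib_right by (rule sum.swap)
  also have "\<dots> = (\<Sum>i\<in>{..<k}. \<Sum>V\<in>upsets. F i V * pi_fun x A V) + (\<Sum>i\<in>{k..n}. \<Sum>V\<in>upsets. F i V * pi_fun x A V)"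
  proof -
    have "{..n} = {..<k} \<union> {k..n}" using kn by auto
    then show ?thesis by (simp only:) (rule sum.union_disjoint, auto)
  qed
  also have "\<dots> = (\<Sum>i\<in>{k..n}. P i x)" using T_low T_high by simp
  also have "\<dots> = ph k x" using sumform[of k x] kn by simp
  finally show "Lam_seq (take k as) \<phi> x = integ (\<lambda>U. \<Sum>i\<le>length as. \<Psi> i U) (pi_fun x (take k as))"
    unfolding ph_def A_def n_def by simp
qed


end
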